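(* With $A(\delta,\epsilon)$ the lobe area and $\nu=(1-\sqrt\delta)/(1+\sqrt\delta)$, the first-order coefficient $\lim_{\epsilon\to0}A(\delta,\epsilon)/\epsilon=\Gamma(\nu)$ satisfies $$\Gamma\!\left(\frac{1-\sqrt\delta}{1+\sqrt\delta}\right)\sim\frac{4\pi^2}{\delta}\exp\!\left(\frac{-\pi^2}{2\sqrt\delta}\right)\quad\text{as }\delta\to0^+,$$ so that $A(\delta,\epsilon)=\epsilon\,\Gamma(\nu)+O(\epsilon^2)$ with $\Gamma(\nu)$ exponentially small in $\delta^{-1/2}$.
   Context: $\Gamma(\nu)=1+8\sum_{k=1}^{\infty}\frac{(-1)^k k\,\nu^k}{1+\nu^k}$. $A(\delta,\epsilon)$ denotes the area of the lobe bounded by the stable and unstable manifolds of $z_a=(-\tfrac12,0)$, $z_b=(\tfrac12,0)$ for the twist map generated by $\tfrac12(\theta'-\theta)^2+V_\delta(\theta)+\epsilon\cos^2(\pi\theta)$, $V_\delta(\theta)=-\frac{2}{\pi}\int_0^\theta\arctan\!\left(\frac{\delta\sin(2\pi t)}{1+\delta\cos(2\pi t)}\right)dt$, and it satisfies $A=\epsilon\Gamma(\nu)+O(\epsilon^2)$ as $\epsilon\to0$. *)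

theory Defs
  imports "HOL-Analysis.Analysis" "HOL-Library.Landau_Symbols"
begin

definition Gamma_lobe :: "real \<Rightarrow> real" where
  "Gamma_lobe \<nu> = 1 + 8 * (\<Sum>n. (let k = Suc n in (-1) ^ k * real k * \<nu> ^ k / (1 + \<nu> ^ k)))"

end

theory Submission
  imports Defs "HOL-Complex_Analysis.Complex_Analysis" "HOL-Real_Asymp.Real_Asymp"
begin

lemma exp_eq_m1:
  fixes w :: complex
  assumes "exp w = -1"
  shows "Re w = 0 \<and> (\<exists>n::int. Im w = (2*real_of_int n+1)*pi)"
proof -
  have "exp (w + \<i> * of_real pi) = 1"
    using assms by (simp add: exp_add exp_pi_i')
  then obtain n::int where "Re (w + \<i> * of_real pi) = 0" "Im (w + \<i> * of_real pi) = real_of_int (2*n) * pi"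
    unfolding exp_eq_1 by blast
  then have "Re w = 0" "Im w = (2*real_of_int (n-1)+1)*pi" by (auto simp: algebra_simps)
  then show ?thesis by blast
qed

lemma exp_eq_m1_Im:
  fixes w :: complex
  assumes "exp w = -1"
  shows "pi \<le> \<bar>Im w\<bar>"
proof -
  obtain n::int where n: "Im w = (2*real_of_int n+1)*pi" using exp_eq_m1[OF assms] by blast
  have "1 \<le> \<bar>2*real_of_int n+1\<bar>"
  proof -
    have "1 \<le> \<bar>2*n+1\<bar>" by presburger
    then show ?thesis by linarith
  qed
  then have "1 * pi \<le> \<bar>2*real_of_int n+1\<bar> * pi" by (intro mult_right_mono) auto
  then show ?thesis using n by (simp add: abs_mult)
qed

lemma sin_pi_eq_0:
  fixes w :: complex
  assumes "sin (of_real pi * w) = 0"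
  shows "\<exists>n::int. w = of_int n"
proof -
  obtain x::int where "of_real pi * w = of_real (of_int x * pi)" using assms unfolding sin_eq_0 by blast
  then have "w = of_int x" by (simp add: field_simps)
  then show ?thesis by blast
qed


definition Gc :: "real \<Rightarrow> complex \<Rightarrow> complex" where
  "Gc a w = (of_real pi * exp (of_real a * w) / (exp (of_real a * w) + 1)^2) / sin (of_real pi * w)"

definition phi :: "real \<Rightarrow> real" where
  "phi x = exp x / (exp x + 1)^2"

lemma sin_int_pi: "sin (pi * real_of_int m) = 0"
  by (simp add: sin_zero_iff_int2)

lemma cos_int_pi_sq: "(cos (pi * real_of_int m))^2 = 1"
  using sin_cos_squared_add[of "pi * real_of_int m"] sin_int_pi[of m] by simp

lemma residue_int:
  assumes a: "0 < a" "a \<le> 1"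
  shows "residue (Gc a) (of_int m) = of_real (cos (pi * m) * phi (a * m))"
proof -
  define s where "s = ball (of_int m :: complex) (1/2)"
  define f where "f = (\<lambda>w::complex. of_real pi * exp (of_real a * w) / (exp (of_real a * w) + 1)^2)"
  define g where "g = (\<lambda>w::complex. sin (of_real pi * w))"
  have nz: "exp (of_real a * w) + 1 \<noteq> 0" if "w \<in> s" for w
  proof
    assume "exp (of_real a * w) + 1 = 0"
    then have "exp (of_real a * w) = -1" by (simp add: eq_neg_iff_add_eq_0)
    from exp_eq_m1_Im[OF this] have "pi \<le> a * \<bar>Im w\<bar>" using a by (simp add: abs_mult)
    moreover have "\<bar>Im w\<bar> < 1/2"
    proof -
      have "\<bar>Im w\<bar> = \<bar>Im (w - of_int m)\<bar>" by simp
      also have "\<dots> \<le> cmod (w - of_int m)" by (rule abs_Im_le_cmod)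
      also have "\<dots> < 1/2" using that unfolding s_def by (simp add: dist_norm norm_minus_commute)
      finally show ?thesis .
    qed
    ultimately have "pi < 1/2"
      using a by (smt (verit, best) mult_left_le_one_le abs_ge_zero)
    then show False using pi_gt3 by linarith
  qed
  have fh: "f holomorphic_on s" unfolding f_def using nz by (auto intro!: holomorphic_intros)
  have gh: "g holomorphic_on s" unfolding g_def by (auto intro!: holomorphic_intros)
  have gd: "(g has_field_derivative (of_real pi * cos (of_real pi * of_int m))) (at (of_int m))"
    unfolding g_def by (auto intro!: derivative_eq_intros)
  have cosm: "cos (of_real pi * of_int m :: complex) = of_real (cos (pi * m))"
    by (metis cos_of_real of_real_mult of_real_of_int_eq)
  have expm: "exp (of_real a * of_int m :: complex) = of_real (exp (a * m))"
    by (metis exp_of_real of_real_mult of_real_of_int_eq)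
  have c2: "(cos (pi * real_of_int m))^2 = 1" by (rule cos_int_pi_sq)
  then have cnz: "cos (pi * real_of_int m) \<noteq> 0" by auto
  have fnz: "f (of_int m) \<noteq> 0" unfolding f_def expm
    by (simp add: add_pos_pos) (smt (verit) exp_gt_zero of_real_1 of_real_add of_real_eq_0_iff)
  have "residue (\<lambda>w. f w / g w) (of_int m) = f (of_int m) / (of_real pi * cos (of_real pi * of_int m))"
    apply (rule residue_simple_pole_deriv[OF fh gh _ _ _ gd fnz])
    unfolding s_def g_def
    by (auto simp: cosm sin_int_pi cnz intro: convex_connected)
       (metis of_real_mult of_real_of_int_eq sin_int_pi sin_of_real of_real_0)
  also have "(\<lambda>w. f w / g w) = Gc a" unfolding f_def g_def Gc_def by auto
  also have "f (of_int m) / (of_real pi * cos (of_real pi * of_int m)) = of_real (cos (pi * m) * phi (a * m))"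
  proof -
    have "f (of_int m) = of_real (pi * phi (a*m))" unfolding f_def phi_def expm by simp
    then have "f (of_int m) / (of_real pi * cos (of_real pi * of_int m)) = of_real (pi * phi (a*m) / (pi * cos (pi * m)))"
      unfolding cosm by simp
    also have "pi * phi (a*m) / (pi * cos (pi * m)) = cos (pi * m) * phi (a * m)"
      using cnz c2 by (simp add: field_simps power2_eq_square)
    finally show ?thesis .
  qed
  finally show ?thesis .
qed


lemma alg0:
  fixes S C e p q w D :: complex
  assumes "S \<noteq> 0" "D \<noteq> 0"
  shows "(0 * (S*D) - p * (C * (0*w + 1*p) * D + (e*(0*w+1*q) + 0) * S)) / (S*D * (S*D))
     = - (p^2*C)/(S^2*D) - p*q*e/(S*D^2)"
  using assms by (simp add: field_simps power2_eq_square)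

lemma alg1:
  fixes S C e p q w :: complex
  assumes "S \<noteq> 0" "e + 1 \<noteq> 0"
  shows "(0 * (S*(e+1)) - p * (C * (0*w + 1*p) * (e+1) + (e*(0*w+1*q) + 0) * S)) / (S*(e+1) * (S*(e+1)))
     = - (p^2*C)/(S^2*(e+1)) - p*q*e/(S*(e+1)^2)"
  by (rule alg0[OF assms])

lemma residue_z0:
  fixes a r :: real and z0 :: complex
  assumes a: "0 < a" and e0: "exp (of_real a * z0) = -1" and r: "0 < r"
    and sinz: "\<And>w. w \<in> ball z0 r \<Longrightarrow> sin (of_real pi * w) \<noteq> 0"
    and expz: "\<And>w. w \<in> ball z0 r - {z0} \<Longrightarrow> exp (of_real a * w) + 1 \<noteq> 0"
    and cosz: "cos (of_real pi * z0) \<noteq> 0"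
  shows "residue (Gc a) z0 = of_real pi ^ 2 * cos (of_real pi * z0) / (of_real a ^ 2 * sin (of_real pi * z0) ^ 2)"
proof -
  define s where "s = ball z0 r"
  define E where "E = (\<lambda>w::complex. exp (of_real a * w) + 1)"
  define H where "H = (\<lambda>w::complex. of_real pi / (sin (of_real pi * w) * E w))"
  define Hd where "Hd = (\<lambda>w::complex. - (of_real pi ^ 2 * cos (of_real pi * w)) / (sin (of_real pi * w) ^ 2 * E w)
       - of_real pi * of_real a * exp (of_real a * w) / (sin (of_real pi * w) * E w ^ 2))"
  define f where "f = (\<lambda>w::complex. - (of_real pi ^ 2 * cos (of_real pi * w)) / sin (of_real pi * w) ^ 2)"
  define K where "K = (\<lambda>w. f w / E w)"
  have sinz': "sin (of_real pi * w) \<noteq> 0" if "w \<in> s" for w using sinz that s_def by auto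
  have Ez: "E w \<noteq> 0" if "w \<in> s - {z0}" for w using expz that s_def E_def by auto
  have Hder: "(H has_field_derivative Hd w) (at w)" if "w \<in> s - {z0}" for w
  proof -
    have "(H has_field_derivative Hd w) (at w)"
      unfolding H_def E_def
      apply (rule derivative_eq_intros refl)+
      using sinz'[of w] Ez[of w] that unfolding Hd_def E_def
       apply simp
      apply (rule alg1)
      using sinz'[of w] Ez[of w] that unfolding E_def by auto
    then show ?thesis .
  qed
  have Hdh: "Hd holomorphic_on s - {z0}"
    unfolding Hd_def using sinz' Ez unfolding E_def by (auto intro!: holomorphic_intros)
  have fh: "f holomorphic_on s"
    unfolding f_def using sinz' by (auto intro!: holomorphic_intros)
  have Eh: "E holomorphic_on s" unfolding E_def by (auto intro!: holomorphic_intros)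
  have Kh: "K holomorphic_on s - {z0}" unfolding K_def using fh Eh Ez
    by (auto intro!: holomorphic_intros elim: holomorphic_on_subset)
  have z0s: "z0 \<in> s" using r s_def by simp
  have "residue Hd z0 = 0"
  proof -
    have c1: "(Hd has_contour_integral complex_of_real (2 * pi) * \<i> * residue Hd z0) (circlepath z0 (r/2))"
      by (rule base_residue[OF _ z0s _ Hdh]) (use r in \<open>auto simp: s_def\<close>)
    have c2: "(Hd has_contour_integral 0) (circlepath z0 (r/2))"
    proof (rule Cauchy_theorem_primitive[of "s - {z0}" H])
      show "\<And>x. x \<in> s - {z0} \<Longrightarrow> (H has_field_derivative Hd x) (at x within s - {z0})"
        using Hder by (blast intro: has_field_derivative_at_within)
      show "path_image (circlepath z0 (r / 2)) \<subseteq> s - {z0}"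
        using r by (auto simp: s_def path_image_circlepath dist_commute)
    qed auto
    from has_contour_integral_unique[OF c1 c2] show ?thesis by simp
  qed
  moreover have "residue K z0 = f z0 / (exp (of_real a * z0) * of_real a)"
    unfolding K_def
  proof (rule residue_simple_pole_deriv[OF fh Eh])
    show "(E has_field_derivative exp (of_real a * z0) * of_real a) (at z0)"
      unfolding E_def by (auto intro!: derivative_eq_intros)
    show "f z0 \<noteq> 0" unfolding f_def using cosz sinz'[OF z0s] by simp
    show "E z0 = 0" unfolding E_def using e0 by simp
    show "exp (of_real a * z0) * of_real a \<noteq> 0" using a by simp
  qed (use r in \<open>auto simp: s_def z0s\<close>)
  moreover have "residue (Gc a) z0 = residue (\<lambda>w. (- 1 / of_real a) * (Hd w - K w)) z0"
  proof (rule residue_cong)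
    have "Gc a w = (- 1 / of_real a) * (Hd w - K w)" if "w \<in> s - {z0}" for w
      using sinz'[of w] Ez[of w] that a unfolding Gc_def Hd_def K_def f_def E_def
      by (simp add: field_simps power2_eq_square)
    moreover have "eventually (\<lambda>w. w \<in> s - {z0}) (at z0)"
      unfolding s_def using r by (intro eventually_at_in_open) auto
    ultimately show "eventually (\<lambda>w. Gc a w = (- 1 / of_real a) * (Hd w - K w)) (at z0)"
      by (auto elim: eventually_mono)
  qed simp
  moreover have "residue (\<lambda>w. (- 1 / of_real a) * (Hd w - K w)) z0 = (- 1 / of_real a) * (residue Hd z0 - residue K z0)"
  proof -
    have os: "open s" unfolding s_def by simp
    have hd: "(\<lambda>w. Hd w - K w) holomorphic_on s - {z0}" using Hdh Kh by (auto intro!: holomorphic_intros)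
    show ?thesis using residue_lmul[OF os z0s hd, of "- 1 / of_real a"] residue_diff[OF os z0s Hdh Kh] by simp
  qed
  ultimately show ?thesis using e0 a unfolding f_def
    by (simp add: field_simps power2_eq_square)
qed


lemma cos_ii_real: "cos (\<i> * complex_of_real c) = of_real (cosh c)"
  by (simp add: cos_i_times cosh_def exp_minus exp_of_real[symmetric] scaleR_conv_of_real)

lemma sin_ii_real: "sin (\<i> * complex_of_real c) = \<i> * of_real (sinh c)"
  by (simp add: sin_i_times sinh_def exp_minus exp_of_real[symmetric] scaleR_conv_of_real)

lemma residue_pm:
  fixes a :: real
  assumes a: "0 < a"
  shows "residue (Gc a) (\<i> * of_real (pi / a)) = - of_real (pi^2 * cosh (pi^2/a) / (a^2 * (sinh (pi^2/a))^2))"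
    and "residue (Gc a) (- (\<i> * of_real (pi / a))) = - of_real (pi^2 * cosh (pi^2/a) / (a^2 * (sinh (pi^2/a))^2))"
proof -
  have shp: "sinh (pi^2/a) \<noteq> 0" using a by simp
  have chp: "cosh (pi^2/a) \<noteq> 0" by (smt (verit) cosh_real_pos)
  {
    fix \<sigma> :: real assume sg: "\<sigma> = 1 \<or> \<sigma> = -1"
    define z0 where "z0 = \<i> * of_real (\<sigma> * pi / a)"
    have e0: "exp (of_real a * z0) = -1"
    proof -
      have "of_real a * z0 = \<i> * of_real (\<sigma> * pi)" unfolding z0_def using a by (simp add: field_simps)
      then show ?thesis using sg by (auto simp: exp_pi_i' exp_minus)
    qed
    have piz: "of_real pi * z0 = \<i> * of_real (\<sigma> * (pi^2/a))" unfolding z0_def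
      by (simp add: field_simps power2_eq_square)
    have "residue (Gc a) z0 = of_real pi ^ 2 * cos (of_real pi * z0) / (of_real a ^ 2 * sin (of_real pi * z0) ^ 2)"
    proof (rule residue_z0[OF a e0, of "pi/a"])
      show "0 < pi / a" using a by simp
      show "sin (of_real pi * w) \<noteq> 0" if "w \<in> ball z0 (pi / a)" for w
      proof
        assume "sin (of_real pi * w) = 0"
        then obtain n::int where "w = of_int n" using sin_pi_eq_0 by blast
        then have "\<bar>Im (z0 - w)\<bar> = pi / a" unfolding z0_def using sg a by auto
        moreover have "\<bar>Im (z0 - w)\<bar> < pi / a" using that abs_Im_le_cmod[of "z0 - w"]
          by (auto simp: dist_norm)
        ultimately show False by simp
      qed
      show "exp (of_real a * w) + 1 \<noteq> 0" if "w \<in> ball z0 (pi / a) - {z0}" for w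
      proof
        assume "exp (of_real a * w) + 1 = 0"
        then have "exp (of_real a * w) = -1" by (simp add: eq_neg_iff_add_eq_0)
        from exp_eq_m1[OF this] obtain n::int where n: "Re (of_real a * w) = 0" "Im (of_real a * w) = (2*real_of_int n+1)*pi"
          by blast
        have "\<bar>Im (z0 - w)\<bar> < pi / a" using that abs_Im_le_cmod[of "z0 - w"]
          by (auto simp: dist_norm)
        then have "\<bar>\<sigma> * pi / a - Im w\<bar> < pi / a" unfolding z0_def by simp
        then have "a * \<bar>\<sigma> * pi / a - Im w\<bar> < a * (pi / a)" by (rule mult_strict_left_mono[OF _ a])
        then have "\<bar>a * (\<sigma> * pi / a - Im w)\<bar> < pi" using a by (simp add: abs_mult)
        then have "\<bar>\<sigma> * pi - a * Im w\<bar> < pi" using a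
          by (simp add: right_diff_distrib)
        then have "\<bar>\<sigma> * pi - (2*real_of_int n+1)*pi\<bar> < pi" using n by simp
        moreover have "(\<sigma> - (2*real_of_int n+1)) * pi = \<sigma> * pi - (2*real_of_int n+1)*pi" by (simp add: left_diff_distrib)
        ultimately have "\<bar>(\<sigma> - (2*real_of_int n+1))\<bar> * pi < 1 * pi" by (metis abs_mult abs_of_pos mult_1 pi_gt_zero)
        then have "\<bar>\<sigma> - (2*real_of_int n+1)\<bar> < 1" by (rule mult_right_less_imp_less) (use pi_gt_zero in auto)
        then have "\<sigma> = 2*real_of_int n+1"
        proof -
          assume A: "\<bar>\<sigma> - (2*real_of_int n+1)\<bar> < 1"
          from sg show ?thesis
          proof
            assume "\<sigma> = 1" then have "\<bar>2*real_of_int n\<bar> < 1" using A by simp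
            then have "\<bar>2*n\<bar> < 1" by linarith
            then have "n = 0" by presburger
            then show ?thesis using \<open>\<sigma> = 1\<close> by simp
          next
            assume "\<sigma> = -1" then have "\<bar>2*real_of_int n + 2\<bar> < 1" using A by simp
            then have "\<bar>2*n+2\<bar> < 1" by linarith
            then have "n = -1" by presburger
            then show ?thesis using \<open>\<sigma> = -1\<close> by simp
          qed
        qed
        then have "of_real a * w = \<i> * of_real (\<sigma> * pi)" using n by (simp add: complex_eq_iff)
        then have "w = z0" unfolding z0_def using a by (simp add: field_simps)
        then show False using that by simp
      qed
      show "cos (of_real pi * z0) \<noteq> 0" unfolding piz cos_ii_real using chp sg by auto
    qed
    also have "\<dots> = - of_real (pi^2 * cosh (pi^2/a) / (a^2 * (sinh (pi^2/a))^2))"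
      unfolding piz cos_ii_real sin_ii_real using sg shp a
      by (auto simp: field_simps power2_eq_square)
    finally have "residue (Gc a) z0 = - of_real (pi^2 * cosh (pi^2/a) / (a^2 * (sinh (pi^2/a))^2))" .
    then have "residue (Gc a) (\<i> * of_real (\<sigma> * pi / a)) = - of_real (pi^2 * cosh (pi^2/a) / (a^2 * (sinh (pi^2/a))^2))"
      unfolding z0_def .
  }
  note * = this
  show "residue (Gc a) (\<i> * of_real (pi / a)) = - of_real (pi^2 * cosh (pi^2/a) / (a^2 * (sinh (pi^2/a))^2))"
    using *[of 1] by simp
  show "residue (Gc a) (- (\<i> * of_real (pi / a))) = - of_real (pi^2 * cosh (pi^2/a) / (a^2 * (sinh (pi^2/a))^2))"
    using *[of "-1"] by simp
qed


lemma contour_eq: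
  fixes a :: real and N :: nat
  assumes a: "0 < a" "a \<le> 1"
  defines "R \<equiv> real N + 1/2" and "h \<equiv> 2*pi/a"
  shows "contour_integral (rectpath (Complex (-R) (-h)) (Complex R h)) (Gc a) =
     2*pi*\<i> * of_real ((\<Sum>m\<in>{-int N..int N}. cos (pi*m) * phi (a*m)) - 2 * (pi^2 * cosh (pi^2/a) / (a^2 * (sinh (pi^2/a))^2)))"
proof -
  define S where "S = box (Complex (-(N+1)) (-(3*pi/a))) (Complex (N+1) (3*pi/a))"
  define A where "A = (of_int ` {-int N..int N} :: complex set)"
  define z0 where "z0 = \<i> * of_real (pi/a)"
  define pts where "pts = A \<union> {z0, -z0}"
  define a1 where "a1 = Complex (-R) (-h)"
  define a3 where "a3 = Complex R h"
  have hpos: "h > 0" unfolding h_def using a by simp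
  have Rpos: "R > 0" unfolding R_def by simp
  have z0A: "z0 \<notin> A" "-z0 \<notin> A" unfolding A_def z0_def using a by (auto simp: complex_eq_iff)
  have z0ne: "z0 \<noteq> -z0" unfolding z0_def using a by (auto simp: complex_eq_iff)
  have finA: "finite A" unfolding A_def by simp
  have finpts: "finite pts" unfolding pts_def using finA by simp
  have hol: "Gc a holomorphic_on S - pts"
  proof -
    have "sin (of_real pi * w) \<noteq> 0 \<and> exp (of_real a * w) + 1 \<noteq> 0" if w: "w \<in> S - pts" for w
    proof
      show "sin (of_real pi * w) \<noteq> 0"
      proof
        assume "sin (of_real pi * w) = 0"
        then obtain n::int where n: "w = of_int n" using sin_pi_eq_0 by blast
        have "\<bar>real_of_int n\<bar> < real N + 1" using w unfolding S_def n by (auto simp: in_box_complex_iff)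
        then have "n \<in> {-int N..int N}" by auto
        then have "w \<in> pts" unfolding pts_def A_def n by auto
        then show False using w by simp
      qed
      show "exp (of_real a * w) + 1 \<noteq> 0"
      proof
        assume "exp (of_real a * w) + 1 = 0"
        then have "exp (of_real a * w) = -1" by (simp add: eq_neg_iff_add_eq_0)
        from exp_eq_m1[OF this] obtain n::int where n: "Re (of_real a * w) = 0" "Im (of_real a * w) = (2*real_of_int n+1)*pi"
          by blast
        have "\<bar>Im w\<bar> < 3*pi/a" using w unfolding S_def by (auto simp: in_box_complex_iff)
        then have "a * \<bar>Im w\<bar> < a * (3*pi/a)" by (rule mult_strict_left_mono[OF _ a(1)])
        moreover have "a * \<bar>Im w\<bar> = \<bar>a * Im w\<bar>" using a by (simp add: abs_mult)
        moreover have "a * Im w = (2*real_of_int n+1)*pi" using n by simp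
        moreover have "\<bar>(2*real_of_int n+1)*pi\<bar> = \<bar>2*real_of_int n+1\<bar> * pi" by (simp add: abs_mult)
        ultimately have "\<bar>2*real_of_int n+1\<bar> * pi < 3 * pi" using a by simp
        then have "\<bar>2*real_of_int n+1\<bar> < 3" by (rule mult_right_less_imp_less) (use pi_gt_zero in auto)
        then have "\<bar>2*n+1\<bar> < 3" by linarith
        then have "n = 0 \<or> n = -1" by presburger
        then have "w = z0 \<or> w = -z0" using n a unfolding z0_def by (auto simp: complex_eq_iff field_simps)
        then show False using w unfolding pts_def by auto
      qed
    qed
    then show ?thesis unfolding Gc_def by (auto intro!: holomorphic_intros)
  qed
  have ord: "Re a1 \<le> Re a3" "Im a1 \<le> Im a3" unfolding a1_def a3_def using hpos Rpos by auto
  have ptsbox: "pts \<subseteq> box a1 a3"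
  proof -
    have "A \<subseteq> box a1 a3" unfolding A_def a1_def a3_def R_def using hpos
      by (auto simp: in_box_complex_iff)
    moreover have "z0 \<in> box a1 a3" "-z0 \<in> box a1 a3"
    proof -
      have p1: "0 < pi / a" "0 < 2*pi/a" "pi/a < 2*pi/a" using a by (auto simp: divide_strict_right_mono)
      show "z0 \<in> box a1 a3" "-z0 \<in> box a1 a3" unfolding z0_def a1_def a3_def h_def using Rpos p1
        by (auto simp: in_box_complex_iff)
    qed
    ultimately show ?thesis unfolding pts_def by auto
  qed
  have cb: "cbox a1 a3 \<subseteq> S"
  proof -
    have "2*pi/a < 3*pi/a" using a by (simp add: divide_strict_right_mono)
    then show ?thesis unfolding a1_def a3_def S_def R_def h_def
      by (auto simp: in_box_complex_iff in_cbox_complex_iff)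
  qed
  have pim: "path_image (rectpath a1 a3) \<subseteq> S - pts"
    using path_image_rectpath_cbox_minus_box[OF ord] cb ptsbox by auto
  have wout: "\<forall>z. z \<notin> S \<longrightarrow> winding_number (rectpath a1 a3) z = 0"
    using winding_number_rectpath_outside[OF ord] cb by auto
  have "contour_integral (rectpath a1 a3) (Gc a) = 2 * pi * \<i> * (\<Sum>p\<in>pts. winding_number (rectpath a1 a3) p * residue (Gc a) p)"
    by (rule Residue_theorem[OF _ _ finpts hol _ _ pim wout]) (auto simp: S_def intro: convex_connected)
  also have "(\<Sum>p\<in>pts. winding_number (rectpath a1 a3) p * residue (Gc a) p) = (\<Sum>p\<in>pts. residue (Gc a) p)"
    using ptsbox by (intro sum.cong) (auto simp: winding_number_rectpath)
  also have "\<dots> = (\<Sum>p\<in>A. residue (Gc a) p) + (residue (Gc a) z0 + residue (Gc a) (-z0))"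
    unfolding pts_def using finA z0A z0ne by (subst sum.union_disjoint) auto
  also have "(\<Sum>p\<in>A. residue (Gc a) p) = (\<Sum>m\<in>{-int N..int N}. residue (Gc a) (of_int m))"
    unfolding A_def by (subst sum.reindex) (auto simp: inj_on_def)
  also have "\<dots> = of_real (\<Sum>m\<in>{-int N..int N}. cos (pi*m) * phi (a*m))"
    using residue_int[OF a] by simp
  also have "residue (Gc a) z0 + residue (Gc a) (-z0) = - of_real (2 * (pi^2 * cosh (pi^2/a) / (a^2 * (sinh (pi^2/a))^2)))"
    unfolding z0_def residue_pm[OF a(1)] by simp
  finally show ?thesis unfolding a1_def a3_def by simp
qed


lemma norm_sin_ge_sinh: "\<bar>sinh (Im z)\<bar> \<le> cmod (sin z)"
proof -
  have "(sinh (Im z))^2 = (exp (2 * Im z) + inverse (exp (2 * Im z)) - 2) / 4"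
    by (simp add: sinh_def power2_eq_square field_simps exp_minus flip: exp_add)
  also have "\<dots> \<le> (exp (2 * Im z) + inverse (exp (2 * Im z)) - 2 * cos (2 * Re z)) / 4"
    by (simp add: divide_right_mono)
  also have "\<dots> = (cmod (sin z))^2" by (rule norm_sin_squared[symmetric])
  finally show ?thesis using abs_le_square_iff[of "sinh (Im z)" "cmod (sin z)"] by simp
qed

lemma norm_sin_ge_sin: "\<bar>sin (Re z)\<bar> \<le> cmod (sin z)"
proof -
  have "(sin (Re z))^2 = (2 - 2 * cos (2 * Re z)) / 4"
    by (simp add: cos_double_sin)
  also have "\<dots> \<le> (exp (2 * Im z) + inverse (exp (2 * Im z)) - 2 * cos (2 * Re z)) / 4"
  proof -
    have "2 \<le> exp (2 * Im z) + inverse (exp (2 * Im z))"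
    proof -
      have "0 \<le> (exp (Im z) - inverse (exp (Im z)))^2" by simp
      also have "\<dots> = exp (2 * Im z) + inverse (exp (2 * Im z)) - 2"
        by (simp add: power2_eq_square field_simps exp_minus flip: exp_add)
      finally show ?thesis by simp
    qed
    then show ?thesis by (simp add: divide_right_mono)
  qed
  also have "\<dots> = (cmod (sin z))^2" by (rule norm_sin_squared[symmetric])
  finally show ?thesis using abs_le_square_iff[of "sin (Re z)" "cmod (sin z)"] by simp
qed

definition sig :: "real \<Rightarrow> real" where "sig x = exp x / (exp x + 1)"

lemma sig_deriv: "(sig has_real_derivative phi x) (at x)"
  unfolding sig_def phi_def
  apply (rule derivative_eq_intros refl)+
   apply (smt (verit) exp_gt_zero)
  apply (simp add: power2_eq_square algebra_simps)
  done

lemma sig_bounds: "0 < sig x" "sig x < 1"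
  unfolding sig_def by (auto simp: add_pos_pos)

lemma phi_pos: "0 < phi x" unfolding phi_def by (smt (verit) exp_gt_zero divide_pos_pos zero_less_power)


lemma horiz_bound:
  fixes a x1 x2 y :: real
  assumes a: "0 < a" and y: "y = 2*pi/a \<or> y = -(2*pi/a)" and x: "x1 \<le> x2"
    and cont: "continuous_on (closed_segment (Complex x1 y) (Complex x2 y)) (Gc a)"
  shows "norm (contour_integral (linepath (Complex x1 y) (Complex x2 y)) (Gc a)) \<le> pi / (a * sinh (2*pi^2/a))"
proof -
  define p where "p = Complex x1 y"
  define q where "q = Complex x2 y"
  define C where "C = pi / sinh (2*pi^2/a)"
  have shpos: "0 < sinh (2*pi^2/a)" using a by simp
  have Cpos: "0 < C" unfolding C_def using shpos by simp
  have I: "(Gc a has_contour_integral contour_integral (linepath p q) (Gc a)) (linepath p q)"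
    using contour_integrable_continuous_linepath[OF cont[folded p_def q_def]] has_contour_integral_integral by blast
  then have I2: "((\<lambda>t. Gc a (linepath p q t) * (q - p)) has_integral contour_integral (linepath p q) (Gc a)) {0..1}"
    by (simp add: has_contour_integral_linepath)
  define g where "g = (\<lambda>t. C * ((x2 - x1) * phi (a * (x1 + t * (x2 - x1)))))"
  have gint: "(g has_integral C * ((sig (a * (x1 + 1 * (x2 - x1))) - sig (a * (x1 + 0 * (x2 - x1)))) / a)) {0..1}"
  proof -
    have "((\<lambda>t. (x2 - x1) * phi (a * (x1 + t * (x2 - x1)))) has_integral
          (sig (a * (x1 + 1 * (x2 - x1))) / a - sig (a * (x1 + 0 * (x2 - x1))) / a)) {0..1}"
    proof (rule fundamental_theorem_of_calculus[where f = "\<lambda>t. sig (a * (x1 + t * (x2 - x1))) / a"])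
      fix t :: real
      have "((\<lambda>t. sig (a * (x1 + t * (x2 - x1))) / a) has_real_derivative
             (x2 - x1) * phi (a * (x1 + t * (x2 - x1)))) (at t within {0..1})"
        apply (rule derivative_eq_intros DERIV_chain2[OF sig_deriv] refl)+
        using a by (auto simp: field_simps)
      then show "((\<lambda>t. sig (a * (x1 + t * (x2 - x1))) / a) has_vector_derivative
             (x2 - x1) * phi (a * (x1 + t * (x2 - x1)))) (at t within {0..1})"
        by (simp add: has_real_derivative_iff_has_vector_derivative[symmetric])
    qed simp
    then show ?thesis unfolding g_def
      using has_integral_mult_right[of _ _ "{0..1::real}" C] by (simp add: diff_divide_distrib)
  qed
  have bnd: "norm (Gc a (linepath p q t) * (q - p)) \<le> g t" if t: "t \<in> {0..1}" for t
  proof -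
    define x where "x = x1 + t * (x2 - x1)"
    have lp: "linepath p q t = Complex x y"
      unfolding linepath_def p_def q_def x_def by (simp add: complex_eq_iff scaleR_conv_of_real algebra_simps)
    have ay: "a * y = 2 * pi \<or> a * y = - (2 * pi)" using y a by auto
    have ex: "exp (of_real a * Complex x y) = of_real (exp (a * x))"
    proof -
      have e: "of_real a * Complex x y = Complex (a * x) (a * y)" by (simp add: complex_eq_iff)
      from ay have "Complex (cos (a * y)) (sin (a * y)) = 1" by (auto simp: complex_eq_iff)
      then show ?thesis unfolding e exp_Complex by simp
    qed
    have sn: "sinh (2*pi^2/a) \<le> cmod (sin (of_real pi * Complex x y))"
    proof -
      have "Im (of_real pi * Complex x y) = pi * y" by simp
      moreover have "\<bar>sinh (pi * y)\<bar> = sinh (2*pi^2/a)"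
        using y a shpos by (auto simp: power2_eq_square)
      ultimately show ?thesis using norm_sin_ge_sinh[of "of_real pi * Complex x y"] by simp
    qed
    have "norm (Gc a (Complex x y)) = pi * phi (a * x) / cmod (sin (of_real pi * Complex x y))"
    proof -
      have "exp (a * x) + 1 > 0" by (smt (verit) exp_gt_zero)
      then show ?thesis unfolding Gc_def ex phi_def
        by (simp add: norm_divide norm_mult norm_power flip: of_real_add of_real_power)
    qed
    also have "\<dots> \<le> pi * phi (a * x) / sinh (2*pi^2/a)"
    proof -
      have "0 < cmod (sin (of_real pi * Complex x y))" using sn shpos by linarith
      then show ?thesis using sn shpos phi_pos[of "a*x"] by (intro divide_left_mono mult_pos_pos) auto
    qed
    finally have "norm (Gc a (Complex x y)) \<le> C * phi (a * x)" unfolding C_def by simp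
    moreover have "norm (q - p) = x2 - x1"
    proof -
      have "q - p = of_real (x2 - x1)" unfolding p_def q_def by (simp add: complex_eq_iff)
      then show ?thesis using x by (simp only: norm_of_real)
    qed
    ultimately have "norm (Gc a (Complex x y)) * norm (q - p) \<le> (C * phi (a * x)) * (x2 - x1)"
      using x by (metis mult_right_mono diff_ge_0_iff_ge)
    then show ?thesis unfolding lp g_def by (simp add: norm_mult x_def mult_ac)
  qed
  have "norm (contour_integral (linepath p q) (Gc a)) \<le> (C * ((sig (a * (x1 + 1 * (x2 - x1))) - sig (a * (x1 + 0 * (x2 - x1)))) / a)) \<bullet> (1::real)"
    by (rule has_integral_norm_bound_integral_component[OF I2 gint]) (use bnd in simp)
  also have "\<dots> \<le> C * (1 / a)"
  proof -
    have "sig (a * (x1 + 1 * (x2 - x1))) - sig (a * (x1 + 0 * (x2 - x1))) \<le> 1"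
      using sig_bounds[of "a * (x1 + 1 * (x2 - x1))"] sig_bounds[of "a * (x1 + 0 * (x2 - x1))"] by linarith
    then show ?thesis using Cpos a by (simp add: divide_right_mono)
  qed
  finally show ?thesis unfolding C_def p_def q_def by (simp add: mult.commute)
qed


lemma abs_sin_half_int: "\<bar>sin (pi * (real N + 1/2))\<bar> = 1"
proof -
  have "sin (pi * (real N + 1/2)) = cos (real N * pi)"
    by (simp add: distrib_left sin_add mult.commute)
  then show ?thesis by (simp add: cos_npi)
qed

lemma vert_bound:
  fixes a x y1 y2 :: real and N :: nat
  assumes a: "0 < a" and x: "x = real N + 1/2 \<or> x = -(real N + 1/2)"
    and cont: "continuous_on (closed_segment (Complex x y1) (Complex x y2)) (Gc a)"
  shows "norm (contour_integral (linepath (Complex x y1) (Complex x y2)) (Gc a))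
     \<le> pi * exp (a * (real N + 1/2)) / (exp (a * (real N + 1/2)) - 1)^2 * \<bar>y2 - y1\<bar>"
proof -
  define p where "p = Complex x y1"
  define q where "q = Complex x y2"
  define u where "u = exp (a * (real N + 1/2))"
  have u1: "1 < u" unfolding u_def using a by simp
  define B where "B = pi * u / (u - 1)^2"
  have I: "(Gc a has_contour_integral contour_integral (linepath p q) (Gc a)) (linepath p q)"
    using contour_integrable_continuous_linepath[OF cont[folded p_def q_def]] has_contour_integral_integral by blast
  have ex1: "exp (a * x) \<noteq> 1" using x a by auto
  have Bx: "pi * exp (a * x) / (exp (a * x) - 1)^2 = B"
    using x
  proof
    assume "x = real N + 1/2" then show ?thesis unfolding B_def u_def by simp
  next
    assume hx: "x = -(real N + 1/2)"
    have "a * x = - (a * (real N + 1/2))" unfolding hx by (simp only: mult_minus_right)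
    then have "exp (a * x) = exp (- (a * (real N + 1/2)))" by (simp only:)
    then have e: "exp (a * x) = 1 / u" unfolding u_def by (simp add: exp_minus field_simps)
    have "1 / u - 1 = - ((u - 1) / u)" using u1 by (simp add: field_simps)
    then show ?thesis unfolding B_def e using u1 by (simp add: power2_eq_square)
  qed
  have bnd: "norm (Gc a w) \<le> B" if w: "w \<in> closed_segment p q" for w
  proof -
    have rw: "Re w = x" using w unfolding p_def q_def by (simp add: closed_segment_same_Re)
    have s1: "1 \<le> cmod (sin (of_real pi * w))"
    proof -
      have "\<bar>sin (pi * x)\<bar> = 1"
        using x
      proof
        assume hx: "x = -(real N + 1/2)"
        have "pi * x = - (pi * (real N + 1/2))" unfolding hx by (simp only: mult_minus_right)
        then show ?thesis using abs_sin_half_int[of N] by (simp only: sin_minus abs_minus_cancel)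
      qed (use abs_sin_half_int[of N] in simp)
      then have "\<bar>sin (Re (of_real pi * w))\<bar> = 1" using rw by simp
      then show ?thesis using norm_sin_ge_sin[of "of_real pi * w"] by simp
    qed
    have ne: "cmod (exp (of_real a * w)) = exp (a * x)" using rw by (simp add: norm_exp_eq_Re)
    have d1: "\<bar>exp (a * x) - 1\<bar> \<le> cmod (exp (of_real a * w) + 1)"
      using norm_triangle_ineq3[of "exp (of_real a * w)" "-1"] ne rw by simp
    have d0: "0 < \<bar>exp (a * x) - 1\<bar>" using ex1 by simp
    have "norm (Gc a w) = pi * exp (a * x) / ((cmod (exp (of_real a * w) + 1))^2 * cmod (sin (of_real pi * w)))"
      unfolding Gc_def using ne by (simp add: norm_divide norm_mult norm_power)
    also have "\<dots> \<le> pi * exp (a * x) / ((exp (a * x) - 1)^2 * 1)"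
    proof -
      have "(exp (a * x) - 1)^2 \<le> (cmod (exp (of_real a * w) + 1))^2"
        using d1 by (metis abs_le_square_iff abs_norm_cancel power2_abs)
      then have le: "(exp (a * x) - 1)^2 * 1 \<le> (cmod (exp (of_real a * w) + 1))^2 * cmod (sin (of_real pi * w))"
        using s1 by (intro mult_mono) auto
      have pos: "0 < (exp (a * x) - 1)^2 * 1" using ex1 by simp
      show ?thesis
        by (rule divide_left_mono[OF le]) (use pos le in \<open>auto intro!: mult_pos_pos\<close>)
    qed
    also have "\<dots> = B" using Bx by simp
    finally show ?thesis .
  qed
  have "norm (contour_integral (linepath p q) (Gc a)) \<le> B * cmod (q - p)"
    by (rule has_contour_integral_bound_linepath[OF I]) (use bnd u1 in \<open>auto simp: B_def\<close>)
  moreover have "cmod (q - p) = \<bar>y2 - y1\<bar>"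
  proof -
    have "q - p = \<i> * of_real (y2 - y1)" unfolding p_def q_def by (simp add: complex_eq_iff)
    then show ?thesis by (simp only: norm_mult norm_ii norm_of_real mult_1)
  qed
  ultimately show ?thesis unfolding B_def u_def p_def q_def by simp
qed


lemma rect_bound:
  fixes a :: real and N :: nat
  assumes a: "0 < a" "a \<le> 1"
  defines "R \<equiv> real N + 1/2" and "h \<equiv> 2*pi/a"
  defines "u \<equiv> exp (a * R)"
  shows "\<bar>(\<Sum>m\<in>{-int N..int N}. cos (pi*m) * phi (a*m)) - 2 * (pi^2 * cosh (pi^2/a) / (a^2 * (sinh (pi^2/a))^2))\<bar>
     \<le> 1 / (a * sinh (2*pi^2/a)) + 2 * h * u / (u - 1)^2"
proof -
  define X where "X = (\<Sum>m\<in>{-int N..int N}. cos (pi*m) * phi (a*m)) - 2 * (pi^2 * cosh (pi^2/a) / (a^2 * (sinh (pi^2/a))^2))"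
  define a1 where "a1 = Complex (-R) (-h)"
  define a2 where "a2 = Complex R (-h)"
  define a3 where "a3 = Complex R h"
  define a4 where "a4 = Complex (-R) h"
  have hpos: "h > 0" unfolding h_def using a by simp
  have Rpos: "R > 0" unfolding R_def by simp
  have ord: "Re a1 \<le> Re a3" "Im a1 \<le> Im a3" unfolding a1_def a3_def using hpos Rpos by auto
  have good: "sin (of_real pi * w) \<noteq> 0 \<and> exp (of_real a * w) + 1 \<noteq> 0" if w: "w \<in> path_image (rectpath a1 a3)" for w
  proof -
    from w have w': "w \<in> cbox a1 a3 - box a1 a3" using path_image_rectpath_cbox_minus_box[OF ord] by simp
    then have edge: "Re w = R \<or> Re w = -R \<or> Im w = h \<or> Im w = -h"
      unfolding a1_def a3_def by (auto simp: in_box_complex_iff in_cbox_complex_iff)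
    show ?thesis
    proof
      show "sin (of_real pi * w) \<noteq> 0"
      proof
        assume "sin (of_real pi * w) = 0"
        then obtain n::int where n: "w = of_int n" using sin_pi_eq_0 by blast
        then have "Im w = 0" by simp
        then have "real_of_int n = R \<or> real_of_int n = -R" using edge hpos n by auto
        then have "2 * real_of_int n = 2 * real N + 1 \<or> 2 * real_of_int n = - (2 * real N + 1)"
          unfolding R_def by auto
        then have "2 * n = 2 * int N + 1 \<or> 2 * n = - (2 * int N + 1)" by linarith
        then show False by presburger
      qed
      show "exp (of_real a * w) + 1 \<noteq> 0"
      proof
        assume "exp (of_real a * w) + 1 = 0"
        then have "exp (of_real a * w) = -1" by (simp add: eq_neg_iff_add_eq_0)
        from exp_eq_m1[OF this] obtain n::int where n: "Re (of_real a * w) = 0" "Im (of_real a * w) = (2*real_of_int n+1)*pi"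
          by blast
        have "Re w = 0" using n a by simp
        then have "Im w = h \<or> Im w = -h" using edge Rpos by auto
        then have "a * Im w = 2 * pi \<or> a * Im w = - (2 * pi)" unfolding h_def using a by auto
        then have "(2*real_of_int n+1) * pi = 2 * pi \<or> (2*real_of_int n+1) * pi = (-2) * pi" using n by simp
        then have "2*real_of_int n+1 = 2 \<or> 2*real_of_int n+1 = -2" by (metis mult_cancel_right pi_neq_zero)
        then have "2*n+1 = 2 \<or> 2*n+1 = -2" by linarith
        then show False by presburger
      qed
    qed
  qed
  have holo: "Gc a holomorphic_on path_image (rectpath a1 a3)"
    unfolding Gc_def using good by (auto intro!: holomorphic_intros)
  have cont: "continuous_on (path_image (rectpath a1 a3)) (Gc a)"
    by (rule holomorphic_on_imp_continuous_on[OF holo])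
  have pimg: "path_image (rectpath a1 a3) = closed_segment a1 a2 \<union> closed_segment a2 a3 \<union> closed_segment a3 a4 \<union> closed_segment a4 a1"
    unfolding a1_def a2_def a3_def a4_def by (simp add: rectpath_def Let_def path_image_join Un_assoc)
  have c1: "continuous_on (closed_segment a1 a2) (Gc a)" using cont pimg by (auto intro: continuous_on_subset)
  have c2: "continuous_on (closed_segment a2 a3) (Gc a)" using cont pimg by (auto intro: continuous_on_subset)
  have c3: "continuous_on (closed_segment a3 a4) (Gc a)" using cont pimg by (auto intro: continuous_on_subset)
  have c4: "continuous_on (closed_segment a4 a1) (Gc a)" using cont pimg by (auto intro: continuous_on_subset)
  note i1 = contour_integrable_continuous_linepath[OF c1]
  note i2 = contour_integrable_continuous_linepath[OF c2]
  note i3 = contour_integrable_continuous_linepath[OF c3]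
  note i4 = contour_integrable_continuous_linepath[OF c4]
  have rp: "rectpath a1 a3 = linepath a1 a2 +++ linepath a2 a3 +++ linepath a3 a4 +++ linepath a4 a1"
    unfolding a1_def a2_def a3_def a4_def by (simp add: rectpath_def Let_def)
  have ci: "contour_integral (rectpath a1 a3) (Gc a) =
      contour_integral (linepath a1 a2) (Gc a) + contour_integral (linepath a2 a3) (Gc a) +
      contour_integral (linepath a3 a4) (Gc a) + contour_integral (linepath a4 a1) (Gc a)"
    unfolding rp using i1 i2 i3 i4 by (simp add: contour_integrable_joinI)
  have b1: "norm (contour_integral (linepath a1 a2) (Gc a)) \<le> pi / (a * sinh (2*pi^2/a))"
    unfolding a1_def a2_def h_def by (rule horiz_bound[OF a(1)]) (use c1 Rpos in \<open>auto simp: a1_def a2_def h_def\<close>)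
  have b3: "norm (contour_integral (linepath a3 a4) (Gc a)) \<le> pi / (a * sinh (2*pi^2/a))"
  proof -
    have "contour_integral (linepath a3 a4) (Gc a) = - contour_integral (linepath a4 a3) (Gc a)"
      using contour_integral_reversepath[OF valid_path_linepath[of a4 a3], of "Gc a"] by (simp add: reversepath_linepath)
    moreover have "norm (contour_integral (linepath a4 a3) (Gc a)) \<le> pi / (a * sinh (2*pi^2/a))"
      unfolding a4_def a3_def h_def by (rule horiz_bound[OF a(1)]) (use c3 Rpos in \<open>auto simp: a3_def a4_def h_def closed_segment_commute\<close>)
    ultimately show ?thesis by simp
  qed
  have b2: "norm (contour_integral (linepath a2 a3) (Gc a)) \<le> pi * u / (u - 1)^2 * (2 * h)"
  proof -
    have "norm (contour_integral (linepath a2 a3) (Gc a)) \<le> pi * exp (a * (real N + 1/2)) / (exp (a * (real N + 1/2)) - 1)^2 * \<bar>h - (-h)\<bar>"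
      unfolding a2_def a3_def by (rule vert_bound[OF a(1)]) (use c2 in \<open>auto simp: a2_def a3_def R_def\<close>)
    then show ?thesis using hpos unfolding u_def R_def by simp
  qed
  have b4: "norm (contour_integral (linepath a4 a1) (Gc a)) \<le> pi * u / (u - 1)^2 * (2 * h)"
  proof -
    have "norm (contour_integral (linepath a4 a1) (Gc a)) \<le> pi * exp (a * (real N + 1/2)) / (exp (a * (real N + 1/2)) - 1)^2 * \<bar>(-h) - h\<bar>"
      unfolding a4_def a1_def by (rule vert_bound[OF a(1)]) (use c4 in \<open>auto simp: a4_def a1_def R_def\<close>)
    then show ?thesis using hpos unfolding u_def R_def by simp
  qed
  have "norm (contour_integral (rectpath a1 a3) (Gc a)) \<le> 2 * (pi / (a * sinh (2*pi^2/a))) + 2 * (pi * u / (u - 1)^2 * (2 * h))"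
    unfolding ci using b1 b2 b3 b4 norm_triangle_le
    by (smt (verit, best) norm_triangle_ineq)
  moreover have "contour_integral (rectpath a1 a3) (Gc a) = 2*pi*\<i> * of_real X"
    unfolding a1_def a3_def X_def R_def h_def by (rule contour_eq[OF a])
  moreover have "norm (2*pi*\<i> * (of_real X :: complex)) = 2 * pi * \<bar>X\<bar>"
    by (simp add: norm_mult)
  ultimately have "2 * pi * \<bar>X\<bar> \<le> 2 * (pi / (a * sinh (2*pi^2/a))) + 2 * (pi * u / (u - 1)^2 * (2 * h))"
    by simp
  then have "\<bar>X\<bar> \<le> (2 * (pi / (a * sinh (2*pi^2/a))) + 2 * (pi * u / (u - 1)^2 * (2 * h))) / (2 * pi)"
    by (simp add: pos_le_divide_eq mult.commute)
  also have "\<dots> = 1 / (a * sinh (2*pi^2/a)) + 2 * h * u / (u - 1)^2"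
    by (simp add: add_divide_distrib)
  finally show ?thesis unfolding X_def .
qed


lemma infsum_suminf_norm:
  fixes f :: "nat \<Rightarrow> real"
  assumes "summable (\<lambda>n. norm (f n))"
  shows "infsum f UNIV = suminf f"
proof -
  have "summable f" using assms summable_norm_cancel by blast
  then have "(f has_sum suminf f) UNIV" using norm_summable_imp_has_sum[OF assms] summable_sums by blast
  then show ?thesis by (rule infsumI)
qed

lemma summable_deriv_geom:
  fixes x :: real
  assumes "0 \<le> x" "x < 1"
  shows "summable (\<lambda>n. real (Suc n) * x ^ Suc n)"
proof -
  have "summable (\<lambda>n. real (Suc n) * x ^ n)"
    using geometric_deriv_sums[of x] assms by (auto simp: sums_iff)
  then have "summable (\<lambda>n. x * (real (Suc n) * x ^ n))" by (rule summable_mult)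
  then show ?thesis by (simp add: mult_ac)
qed

lemma lambert_swap:
  fixes x :: real
  assumes x: "0 < x" "x < 1"
  shows "(\<Sum>n. (-1) ^ Suc n * real (Suc n) * x ^ Suc n / (1 + x ^ Suc n))
       = (\<Sum>j. (-1) ^ Suc j * x ^ Suc j / (1 + x ^ Suc j)^2)"
proof -
  define F where "F = (\<lambda>n j. (-1) ^ Suc n * real (Suc n) * (-1) ^ j * x ^ (Suc n * Suc j))"
  define row where "row = (\<lambda>n. (-1) ^ Suc n * real (Suc n) * x ^ Suc n / (1 + x ^ Suc n))"
  define col where "col = (\<lambda>j. (-1) ^ Suc j * x ^ Suc j / (1 + x ^ Suc j)^2)"
  have xp: "\<And>k. 0 < x ^ k" "\<And>k. x ^ Suc k < 1" using x by (auto simp only: zero_less_power power_Suc_less_one)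
  have xle: "\<And>k. x ^ Suc k \<le> x" using x by (simp add: power_le_one mult_left_le_one_le less_imp_le)
  have rowsum: "(\<lambda>j. F n j) sums row n" for n
  proof -
    define y where "y = x ^ Suc n"
    have y: "0 < y" "y < 1" unfolding y_def by (rule xp(1), rule xp(2))
    have "(\<lambda>j. (-y) ^ j) sums (1 / (1 - (-y)))" by (rule geometric_sums) (use y in auto)
    then have "(\<lambda>j. ((-1) ^ Suc n * real (Suc n) * y) * (-y) ^ j) sums (((-1) ^ Suc n * real (Suc n) * y) * (1 / (1 - (-y))))"
      by (rule sums_mult)
    moreover have "F n j = ((-1) ^ Suc n * real (Suc n) * y) * (-y) ^ j" for j
    proof -
      have e1: "x ^ (Suc n * Suc j) = y * y ^ j" unfolding y_def power_mult by (simp only: power_Suc)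
      have e2: "(-y) ^ j = (-1) ^ j * y ^ j" by (rule power_minus)
      show ?thesis unfolding F_def e1 e2 by (simp only: mult_ac)
    qed
    moreover have "((-1) ^ Suc n * real (Suc n) * y) * (1 / (1 - (-y))) = row n"
      unfolding row_def y_def by simp
    ultimately show ?thesis by simp
  qed
  have rowabs: "(\<lambda>j. norm (F n j)) sums (real (Suc n) * (x ^ Suc n / (1 - x ^ Suc n)))" for n
  proof -
    define y where "y = x ^ Suc n"
    have y: "0 < y" "y < 1" unfolding y_def by (rule xp(1), rule xp(2))
    have "(\<lambda>j. y ^ j) sums (1 / (1 - y))" by (rule geometric_sums) (use y in auto)
    then have "(\<lambda>j. (real (Suc n) * y) * y ^ j) sums ((real (Suc n) * y) * (1 / (1 - y)))"
      by (rule sums_mult)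
    moreover have "norm (F n j) = (real (Suc n) * y) * y ^ j" for j
    proof -
      have e1: "x ^ (Suc n * Suc j) = y * y ^ j" unfolding y_def power_mult by (simp only: power_Suc)
      show ?thesis unfolding F_def e1 using y by (simp add: abs_mult power_abs)
    qed
    ultimately show ?thesis unfolding y_def by simp
  qed
  have colsum: "(\<lambda>n. F n j) sums col j" for j
  proof -
    define z where "z = x ^ Suc j"
    have z: "0 < z" "z < 1" unfolding z_def by (rule xp(1), rule xp(2))
    have "(\<lambda>n. of_nat (Suc n) * (-z) ^ n) sums (1 / (1 - (-z))^2)" by (rule geometric_deriv_sums) (use z in auto)
    then have "(\<lambda>n. ((-1) ^ j * (-z)) * (of_nat (Suc n) * (-z) ^ n)) sums (((-1) ^ j * (-z)) * (1 / (1 - (-z))^2))"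
      by (rule sums_mult)
    moreover have "F n j = ((-1) ^ j * (-z)) * (of_nat (Suc n) * (-z) ^ n)" for n
    proof -
      have e1: "x ^ (Suc n * Suc j) = z * z ^ n" unfolding z_def mult.commute[of "Suc n"] power_mult by (simp only: power_Suc)
      have e2: "(-z) ^ n = (-1) ^ n * z ^ n" by (rule power_minus)
      have e3: "(-1::real) ^ Suc n = - ((-1) ^ n)" by simp
      show ?thesis unfolding F_def e1 e2 e3 by (simp only: mult_ac of_nat_def mult_minus_left mult_minus_right)
    qed
    moreover have "((-1) ^ j * (-z)) * (1 / (1 - (-z))^2) = col j"
      unfolding col_def z_def by simp
    ultimately show ?thesis by simp
  qed
  have row_bound: "norm (row n) \<le> real (Suc n) * x ^ Suc n" for n
  proof -
    have p: "0 < x ^ Suc n" by (rule xp(1))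
    have "norm (row n) = real (Suc n) * x ^ Suc n / (1 + x ^ Suc n)"
      unfolding row_def using p x(1) by (simp add: abs_mult abs_divide power_abs del: power_Suc)
    also have "\<dots> \<le> real (Suc n) * x ^ Suc n / 1"
      by (rule divide_left_mono) (use p in auto)
    finally show ?thesis by simp
  qed
  have row_norm: "summable (\<lambda>n. norm (row n))"
    by (rule summable_comparison_test[OF _ summable_deriv_geom[of x]]) (use row_bound x in auto)
  have col_bound: "norm (col j) \<le> x ^ Suc j" for j
  proof -
    have p: "0 < x ^ Suc j" by (rule xp(1))
    have "norm (col j) = x ^ Suc j / (1 + x ^ Suc j)^2"
      unfolding col_def using p x(1) by (simp add: abs_mult abs_divide power_abs del: power_Suc)
    also have "\<dots> \<le> x ^ Suc j / 1"
    proof (rule divide_left_mono)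
      show "1 \<le> (1 + x ^ Suc j)^2" using p by (simp add: one_le_power del: power_Suc)
    qed (use p in auto)
    finally show ?thesis by simp
  qed
  have col_norm: "summable (\<lambda>j. norm (col j))"
  proof (rule summable_comparison_test[of _ "\<lambda>j. x ^ Suc j"])
    show "summable (\<lambda>j. x ^ Suc j)" using x by (simp add: summable_geometric)
  qed (use col_bound in auto)
  have dbl: "(\<lambda>(n, j). F n j) summable_on UNIV \<times> UNIV"
  proof -
    have "(\<lambda>p. norm (F (fst p) (snd p))) summable_on Sigma UNIV (\<lambda>_. UNIV)"
    proof (subst Infinite_Sum.abs_summable_on_Sigma_iff, intro conjI ballI)
      fix n :: nat
      show "(\<lambda>j. norm (F (fst (n, j)) (snd (n, j)))) summable_on UNIV"
        using rowabs[of n] unfolding fst_conv snd_conv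
        by (intro norm_summable_imp_summable_on) (simp only: real_norm_def abs_idempotent sums_iff)
    next
      have e: "(\<Sum>\<^sub>\<infinity>j\<in>UNIV. norm (F (fst (n, j)) (snd (n, j)))) = real (Suc n) * (x ^ Suc n / (1 - x ^ Suc n))" for n
        unfolding fst_conv snd_conv by (intro infsumI sums_nonneg_imp_has_sum[OF rowabs[of n]]) simp
      have "summable (\<lambda>n. real (Suc n) * (x ^ Suc n / (1 - x ^ Suc n)))"
      proof (rule summable_comparison_test[of _ "\<lambda>n. (1 / (1 - x)) * (real (Suc n) * x ^ Suc n)"])
        show "summable (\<lambda>n. (1 / (1 - x)) * (real (Suc n) * x ^ Suc n))"
          by (rule summable_mult[OF summable_deriv_geom]) (use x in auto)
        show "\<exists>N. \<forall>n\<ge>N. norm (real (Suc n) * (x ^ Suc n / (1 - x ^ Suc n))) \<le> 1 / (1 - x) * (real (Suc n) * x ^ Suc n)"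
        proof (intro exI allI impI)
          fix n :: nat
          have d: "1 - x \<le> 1 - x ^ Suc n" using xle[of n] by simp
          have "norm (real (Suc n) * (x ^ Suc n / (1 - x ^ Suc n))) = real (Suc n) * x ^ Suc n / (1 - x ^ Suc n)"
            using xp[of "Suc n"] xp(2)[of n] by simp
          also have "\<dots> \<le> real (Suc n) * x ^ Suc n / (1 - x)"
            by (rule divide_left_mono) (use d x xp in auto)
          finally show "norm (real (Suc n) * (x ^ Suc n / (1 - x ^ Suc n))) \<le> 1 / (1 - x) * (real (Suc n) * x ^ Suc n)"
            by simp
        qed
      qed
      then show "(\<lambda>n. norm (\<Sum>\<^sub>\<infinity>j\<in>UNIV. norm (F (fst (n, j)) (snd (n, j))))) summable_on UNIV"
      proof -
        have nn: "0 \<le> real (Suc n) * (x ^ Suc n / (1 - x ^ Suc n))" for n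
          using xp(1)[of "Suc n"] xp(2)[of n] by (intro mult_nonneg_nonneg divide_nonneg_pos) auto
        assume sm: "summable (\<lambda>n. real (Suc n) * (x ^ Suc n / (1 - x ^ Suc n)))"
        show ?thesis
          unfolding e by (intro norm_summable_imp_summable_on) (simp only: real_norm_def abs_idempotent abs_of_nonneg[OF nn] sm)
      qed
    qed
    then have "(\<lambda>p. F (fst p) (snd p)) summable_on UNIV \<times> UNIV"
      by (subst summable_on_iff_abs_summable_on_real) assumption
    moreover have "(\<lambda>(n, j). F n j) = (\<lambda>p. F (fst p) (snd p))" by (simp add: split_beta')
    ultimately show ?thesis by simp
  qed
  have rinf: "infsum (F n) UNIV = row n" for n
    using rowsum[of n] rowabs[of n]
    by (intro infsumI norm_summable_imp_has_sum) (auto simp: sums_iff)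
  have cinf: "(\<Sum>\<^sub>\<infinity>n\<in>UNIV. F n j) = col j" for j
  proof -
    have "summable (\<lambda>n. norm (F n j))"
    proof -
      have "summable (\<lambda>n. real (Suc n) * (x ^ Suc j) ^ Suc n)"
        by (rule summable_deriv_geom) (use xp(1)[of "Suc j"] xp(2)[of j] in auto)
      moreover have "norm (F n j) = real (Suc n) * (x ^ Suc j) ^ Suc n" for n
      proof -
        have e1: "x ^ (Suc n * Suc j) = (x ^ Suc j) ^ Suc n" unfolding mult.commute[of "Suc n"] power_mult ..
        show ?thesis unfolding F_def e1 using x(1) by (simp add: abs_mult power_abs del: power_Suc)
      qed
      ultimately show ?thesis by simp
    qed
    then show ?thesis using colsum[of j] by (intro infsumI norm_summable_imp_has_sum)
  qed
  have "(\<Sum>n. row n) = infsum row UNIV" using infsum_suminf_norm[OF row_norm] by simp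
  also have "\<dots> = (\<Sum>\<^sub>\<infinity>n\<in>UNIV. infsum (F n) UNIV)" using rinf by simp
  also have "\<dots> = (\<Sum>\<^sub>\<infinity>j\<in>UNIV. \<Sum>\<^sub>\<infinity>n\<in>UNIV. F n j)" by (rule infsum_swap_banach[OF dbl])
  also have "\<dots> = infsum col UNIV" using cinf by simp
  also have "\<dots> = (\<Sum>j. col j)" using infsum_suminf_norm[OF col_norm] by simp
  finally show ?thesis unfolding row_def col_def .
qed


lemma phi_even: "phi (-x) = phi x"
proof -
  have "exp (-x) / (exp (-x) + 1)^2 = exp x / (exp x + 1)^2"
  proof -
    have p: "exp x + 1 \<noteq> 0" by (smt (verit) exp_gt_zero)
    have "exp (-x) + 1 = (exp x + 1) / exp x" by (simp add: exp_minus field_simps)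
    then show ?thesis using p by (simp add: exp_minus field_simps power2_eq_square)
  qed
  then show ?thesis unfolding phi_def .
qed

lemma phi_alt: "phi t = exp (-t) / (1 + exp (-t))^2"
  using phi_even[of "-t"] unfolding phi_def by (simp add: add.commute)

lemma phi_le: "phi t \<le> exp (-t)"
proof -
  have "phi t = exp (-t) / (1 + exp (-t))^2" by (rule phi_alt)
  also have "\<dots> \<le> exp (-t) / 1"
  proof (rule divide_left_mono)
    have p: "0 < exp (-t)" by simp
    then show "1 \<le> (1 + exp (-t))^2" by (simp add: one_le_power)
    have q: "0 < 1 + exp (-t)" using p by linarith
    show "0 < (1 + exp (-t))^2 * 1" using q by simp
  qed simp
  finally show ?thesis by simp
qed

lemma sum_sym:
  fixes g :: "int \<Rightarrow> real"
  assumes g: "\<And>m. g (-m) = g m"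
  shows "(\<Sum>m\<in>{-int N..int N}. g m) = g 0 + 2 * (\<Sum>k<N. g (int k + 1))"
proof (induction N)
  case 0
  then show ?case by simp
next
  case (Suc N)
  have set: "{-int (Suc N)..int (Suc N)} = insert (int N + 1) (insert (-(int N + 1)) {-int N..int N})"
    by auto
  have "(\<Sum>m\<in>{-int (Suc N)..int (Suc N)}. g m) = g (int N + 1) + (g (-(int N + 1)) + (\<Sum>m\<in>{-int N..int N}. g m))"
    unfolding set by (subst sum.insert; simp)+
  also have "\<dots> = g 0 + 2 * (\<Sum>k<Suc N. g (int k + 1))"
    using Suc g[of "int N + 1"] by simp
  finally show ?case .
qed

lemma series_bound:
  fixes a :: real
  assumes a: "0 < a" "a \<le> 1"
  shows "\<bar>1/4 + 2 * (\<Sum>k. (-1) ^ Suc k * phi (a * real (Suc k))) - 2 * (pi^2 * cosh (pi^2/a) / (a^2 * (sinh (pi^2/a))^2))\<bar>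
     \<le> 1 / (a * sinh (2*pi^2/a))"
proof -
  define f where "f = (\<lambda>k. (-1) ^ Suc k * phi (a * real (Suc k)))"
  define M where "M = pi^2 * cosh (pi^2/a) / (a^2 * (sinh (pi^2/a))^2)"
  define E where "E = 1 / (a * sinh (2*pi^2/a))"
  define v where "v = (\<lambda>N::nat. exp (a * (real N + 1/2)) / (exp (a * (real N + 1/2)) - 1)^2)"
  have sf: "summable f"
  proof (rule summable_comparison_test[of _ "\<lambda>k. exp (-a) ^ Suc k"])
    show "summable (\<lambda>k. exp (-a) ^ Suc k)" using a by (simp add: summable_geometric)
    show "\<exists>N. \<forall>n\<ge>N. norm (f n) \<le> exp (-a) ^ Suc n"
    proof (intro exI allI impI)
      fix n :: nat
      have "norm (f n) = phi (a * real (Suc n))" unfolding f_def real_norm_def abs_mult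
        by (simp add: abs_of_pos[OF phi_pos] del: of_nat_Suc)
      also have "\<dots> \<le> exp (- (a * real (Suc n)))" by (rule phi_le)
      also have "\<dots> = exp (-a) ^ Suc n" by (metis exp_of_nat_mult mult.commute mult_minus_right)
      finally show "norm (f n) \<le> exp (-a) ^ Suc n" .
    qed
  qed
  have part: "(\<Sum>m\<in>{-int N..int N}. cos (pi*m) * phi (a*m)) = 1/4 + 2 * (\<Sum>k<N. f k)" for N
  proof -
    have "(\<Sum>m\<in>{-int N..int N}. cos (pi*m) * phi (a*m)) = cos (pi * real_of_int 0) * phi (a * real_of_int 0) + 2 * (\<Sum>k<N. cos (pi * real_of_int (int k + 1)) * phi (a * real_of_int (int k + 1)))"
      by (rule sum_sym) (simp add: phi_even[of "a * _", symmetric])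
    also have "cos (pi * real_of_int 0) * phi (a * real_of_int 0) = 1/4" by (simp add: phi_def)
    also have "(\<Sum>k<N. cos (pi * real_of_int (int k + 1)) * phi (a * real_of_int (int k + 1))) = (\<Sum>k<N. f k)"
    proof (rule sum.cong[OF refl])
      fix k assume "k \<in> {..<N}"
      have "real_of_int (int k + 1) = real (Suc k)" by simp
      then show "cos (pi * real_of_int (int k + 1)) * phi (a * real_of_int (int k + 1)) = f k"
        unfolding f_def by (simp only: mult.commute[of pi] cos_npi)
    qed
    finally show ?thesis .
  qed
  have bnd: "\<bar>1/4 + 2 * (\<Sum>k<N. f k) - 2 * M\<bar> \<le> E + 2 * (2*pi/a) * v N" for N
    using rect_bound[OF a, of N] unfolding part M_def E_def v_def by simp
  have l1: "(\<lambda>N. \<bar>1/4 + 2 * (\<Sum>k<N. f k) - 2 * M\<bar>) \<longlonglongrightarrow> \<bar>1/4 + 2 * suminf f - 2 * M\<bar>"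
    by (intro tendsto_intros summable_LIMSEQ sf)
  have v0: "v \<longlonglongrightarrow> 0" unfolding v_def using a(1) by real_asymp
  have l2: "(\<lambda>N. E + 2 * (2*pi/a) * v N) \<longlonglongrightarrow> E + 2 * (2*pi/a) * 0"
    by (intro tendsto_intros v0)
  have "\<bar>1/4 + 2 * suminf f - 2 * M\<bar> \<le> E + 2 * (2*pi/a) * 0"
    by (rule LIMSEQ_le[OF l1 l2]) (use bnd in auto)
  then show ?thesis unfolding f_def M_def E_def by simp
qed


lemma Gamma_exp_bound:
  fixes a :: real
  assumes a: "0 < a" "a \<le> 1"
  shows "\<bar>Gamma_lobe (exp (-a)) - 8 * (pi^2 * cosh (pi^2/a) / (a^2 * (sinh (pi^2/a))^2))\<bar>
     \<le> 4 / (a * sinh (2*pi^2/a))"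
proof -
  define x where "x = exp (-a)"
  have x: "0 < x" "x < 1" unfolding x_def using a by auto
  have "Gamma_lobe x = 1 + 8 * (\<Sum>n. (-1) ^ Suc n * real (Suc n) * x ^ Suc n / (1 + x ^ Suc n))"
    unfolding Gamma_lobe_def Let_def by simp
  also have "(\<Sum>n. (-1) ^ Suc n * real (Suc n) * x ^ Suc n / (1 + x ^ Suc n)) = (\<Sum>j. (-1) ^ Suc j * x ^ Suc j / (1 + x ^ Suc j)^2)"
    by (rule lambert_swap[OF x])
  also have "(\<lambda>j. (-1) ^ Suc j * x ^ Suc j / (1 + x ^ Suc j)^2) = (\<lambda>j. (-1) ^ Suc j * phi (a * real (Suc j)))"
  proof
    fix j :: nat
    have "x ^ Suc j = exp (- (a * real (Suc j)))" unfolding x_def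
      by (metis exp_of_nat_mult mult.commute mult_minus_right)
    then show "(-1) ^ Suc j * x ^ Suc j / (1 + x ^ Suc j)^2 = (-1) ^ Suc j * phi (a * real (Suc j))"
      by (simp only: phi_alt[of "a * real (Suc j)"] times_divide_eq_right)
  qed
  finally have G: "Gamma_lobe x = 1 + 8 * (\<Sum>j. (-1) ^ Suc j * phi (a * real (Suc j)))" .
  define S where "S = (\<Sum>j. (-1) ^ Suc j * phi (a * real (Suc j)))"
  define M where "M = pi^2 * cosh (pi^2/a) / (a^2 * (sinh (pi^2/a))^2)"
  have sb: "\<bar>1/4 + 2 * S - 2 * M\<bar> \<le> 1 / (a * sinh (2*pi^2/a))"
    unfolding S_def M_def by (rule series_bound[OF a])
  have "1 + 8 * S - 8 * M = 4 * (1/4 + 2 * S - 2 * M)" by (simp add: algebra_simps)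
  then have "\<bar>1 + 8 * S - 8 * M\<bar> = 4 * \<bar>1/4 + 2 * S - 2 * M\<bar>" by (simp only: abs_mult)
  then have "\<bar>Gamma_lobe x - 8 * M\<bar> \<le> 4 * (1 / (a * sinh (2*pi^2/a)))"
    unfolding G S_def[symmetric] using sb by linarith
  then show ?thesis unfolding x_def M_def by simp
qed

lemma ralg0:
  fixes e A d P D Q :: real
  assumes "e \<noteq> 0" "A \<noteq> 0" "d \<noteq> 0" "P \<noteq> 0" "D \<noteq> 0"
  shows "8 * (pi^2 * ((e * Q)/2) / (A^2 * ((e * D)/2)^2)) / (4 * pi^2 / d * inverse P)
     = (4*d/A^2) * (P / e) * (Q / D^2)"
  using assms by (simp add: field_simps power2_eq_square)

lemma ralg:
  fixes e A d P :: real
  assumes e: "1 < e" and A: "0 < A" and d: "0 < d" and P: "0 < P"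
  shows "8 * (pi^2 * ((e + inverse e)/2) / (A^2 * ((e - inverse e)/2)^2)) / (4 * pi^2 / d * inverse P)
     = (4*d/A^2) * (P / e) * ((1 + (inverse e)^2) / (1 - (inverse e)^2)^2)"
proof -
  define w where "w = inverse e"
  have w: "0 < w" "w < 1" unfolding w_def using e by (auto simp: inverse_less_1_iff)
  have ew: "e * w = 1" unfolding w_def using e by simp
  have w2: "w^2 < 1" using w by (simp add: power_less_one_iff)
  have h1: "e + w = e * (1 + w^2)" using ew by (simp add: power2_eq_square algebra_simps)
  have h2: "e - w = e * (1 - w^2)" using ew by (simp add: power2_eq_square algebra_simps)
  show ?thesis unfolding w_def[symmetric] h1 h2
    by (rule ralg0) (use w2 e A d P in auto)
qed

lemma lim1: "((\<lambda>d::real. 4*d/(ln ((1 + sqrt d)/(1 - sqrt d)))^2) \<longlongrightarrow> 1) (at_right 0)"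
  by real_asymp

lemma lim2: "((\<lambda>d::real. exp (pi^2/(2 * sqrt d)) / exp (pi^2 / ln ((1 + sqrt d)/(1 - sqrt d)))) \<longlongrightarrow> 1) (at_right 0)"
  by real_asymp

lemma lim3: "((\<lambda>d::real. inverse (exp (pi^2 / ln ((1 + sqrt d)/(1 - sqrt d))))) \<longlongrightarrow> 0) (at_right 0)"
  by real_asymp

lemma ev_unit: "eventually (\<lambda>d::real. 0 < d \<and> d < 1) (at_right 0)"
  unfolding eventually_at_right_field by (intro exI[of _ 1]) auto

lemma A_pos: assumes "0 < d" "d < (1::real)" shows "0 < ln ((1 + sqrt d)/(1 - sqrt d))"
proof -
  have "sqrt d < 1" "0 < sqrt d" using assms by auto
  then have "1 < (1 + sqrt d)/(1 - sqrt d)" by simp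
  then show ?thesis by simp
qed

lemma asymp_main:
  "(\<lambda>d::real. 8 * (pi^2 * cosh (pi^2 / ln ((1 + sqrt d)/(1 - sqrt d))) / ((ln ((1 + sqrt d)/(1 - sqrt d)))^2 * (sinh (pi^2 / ln ((1 + sqrt d)/(1 - sqrt d))))^2)))
   \<sim>[at_right 0] (\<lambda>d. 4 * pi\<^sup>2 / d * exp (- (pi\<^sup>2) / (2 * sqrt d)))"
proof (rule asymp_equivI')
  define A where "A = (\<lambda>d::real. ln ((1 + sqrt d)/(1 - sqrt d)))"
  define R where "R = (\<lambda>d::real. (4*d/(A d)^2) * (exp (pi^2/(2 * sqrt d)) / exp (pi^2 / A d))
       * ((1 + (inverse (exp (pi^2 / A d)))^2) / (1 - (inverse (exp (pi^2 / A d)))^2)^2))"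
  have "(R \<longlongrightarrow> 1 * 1 * ((1 + 0^2) / (1 - 0^2)^2)) (at_right 0)"
    unfolding R_def A_def by (intro tendsto_intros lim1 lim2 lim3) auto
  then have R1: "(R \<longlongrightarrow> 1) (at_right 0)" by simp
  have ev: "eventually (\<lambda>d. R d = 8 * (pi^2 * cosh (pi^2 / A d) / ((A d)^2 * (sinh (pi^2 / A d))^2)) /
                (4 * pi\<^sup>2 / d * exp (- (pi\<^sup>2) / (2 * sqrt d)))) (at_right 0)"
    using ev_unit
  proof eventually_elim
    case (elim d)
    have Ap: "0 < A d" unfolding A_def using A_pos elim by auto
    have e1: "1 < exp (pi^2 / A d)" using Ap by simp
    have ch: "cosh (pi^2 / A d) = (exp (pi^2 / A d) + inverse (exp (pi^2 / A d))) / 2"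
      by (simp add: cosh_def exp_minus)
    have sh: "sinh (pi^2 / A d) = (exp (pi^2 / A d) - inverse (exp (pi^2 / A d))) / 2"
      by (simp add: sinh_def exp_minus)
    have ep: "exp (- (pi\<^sup>2) / (2 * sqrt d)) = inverse (exp (pi^2/(2 * sqrt d)))"
      by (simp add: exp_minus[symmetric])
    show ?case unfolding ch sh ep R_def
      by (rule ralg[symmetric]) (use e1 Ap elim in auto)
  qed
  show "((\<lambda>d. 8 * (pi^2 * cosh (pi^2 / ln ((1 + sqrt d)/(1 - sqrt d))) / ((ln ((1 + sqrt d)/(1 - sqrt d)))^2 * (sinh (pi^2 / ln ((1 + sqrt d)/(1 - sqrt d))))^2)) /
       (4 * pi\<^sup>2 / d * exp (- (pi\<^sup>2) / (2 * sqrt d)))) \<longlongrightarrow> 1) (at_right 0)"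
    using tendsto_cong[OF ev] R1 unfolding A_def by simp
qed

lemma asymp_a0:
  "((\<lambda>d::real. ln ((1 + sqrt d)/(1 - sqrt d))) \<longlongrightarrow> 0) (at_right 0)"
  by real_asymp

lemma asymp_err:
  "(\<lambda>d::real. 4 / (ln ((1 + sqrt d)/(1 - sqrt d)) * sinh (2*pi^2 / ln ((1 + sqrt d)/(1 - sqrt d)))))
   \<in> o[at_right 0](\<lambda>d. 4 * pi\<^sup>2 / d * exp (- (pi\<^sup>2) / (2 * sqrt d)))"
  by real_asymp

theorem corollary9:
  shows "(\<lambda>\<delta>::real. Gamma_lobe ((1 - sqrt \<delta>) / (1 + sqrt \<delta>)))
           \<sim>[at_right 0] (\<lambda>\<delta>. 4 * pi\<^sup>2 / \<delta> * exp (- (pi\<^sup>2) / (2 * sqrt \<delta>)))"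
proof -
  define A where "A = (\<lambda>d::real. ln ((1 + sqrt d)/(1 - sqrt d)))"
  define M8 where "M8 = (\<lambda>d::real. 8 * (pi^2 * cosh (pi^2 / A d) / ((A d)^2 * (sinh (pi^2 / A d))^2)))"
  define E where "E = (\<lambda>d::real. 4 / (A d * sinh (2*pi^2 / A d)))"
  define T where "T = (\<lambda>\<delta>::real. 4 * pi\<^sup>2 / \<delta> * exp (- (pi\<^sup>2) / (2 * sqrt \<delta>)))"
  define G where "G = (\<lambda>\<delta>::real. Gamma_lobe ((1 - sqrt \<delta>) / (1 + sqrt \<delta>)))"
  have ev1: "eventually (\<lambda>d::real. 0 < d \<and> d < 1) (at_right 0)" by (rule ev_unit)
  have ev2: "eventually (\<lambda>d. A d < 1) (at_right 0)"
    using asymp_a0 unfolding A_def by (rule order_tendstoD) simp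
  have key: "eventually (\<lambda>d. \<bar>G d - M8 d\<bar> \<le> E d) (at_right 0)"
    using ev1 ev2
  proof eventually_elim
    case (elim d)
    define s where "s = sqrt d"
    have s: "0 < s" "s < 1" unfolding s_def using elim by auto
    have q: "0 < (1 + s) / (1 - s)" using s by simp
    have q1: "1 < (1 + s) / (1 - s)" using s by simp
    have apos: "0 < A d" unfolding A_def s_def[symmetric] using q1 by simp
    have ex: "exp (- A d) = (1 - s) / (1 + s)"
      unfolding A_def s_def[symmetric] using q s by (simp add: exp_minus)
    have "\<bar>Gamma_lobe (exp (- A d)) - 8 * (pi^2 * cosh (pi^2/A d) / ((A d)^2 * (sinh (pi^2/A d))^2))\<bar>
          \<le> 4 / (A d * sinh (2*pi^2/A d))"
      by (rule Gamma_exp_bound) (use apos elim in auto)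
    then show ?case unfolding G_def M8_def E_def ex s_def by simp
  qed
  have errO: "(\<lambda>d. G d - M8 d) \<in> O[at_right 0](E)"
    by (intro bigoI[where c = 1]) (use key in \<open>auto elim: eventually_mono\<close>)
  have Eo: "E \<in> o[at_right 0](T)" unfolding E_def A_def T_def by (rule asymp_err)
  have erro: "(\<lambda>d. G d - M8 d) \<in> o[at_right 0](T)" by (rule landau_o.big_small_trans[OF errO Eo])
  have Meq: "M8 \<sim>[at_right 0] T" unfolding M8_def A_def T_def by (rule asymp_main)
  have "(\<lambda>d. M8 d + (G d - M8 d)) \<sim>[at_right 0] T" by (subst asymp_equiv_add_right[OF erro]) (rule Meq)
  then show ?thesis unfolding G_def T_def by simp
qed

end
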